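(* Let $X$ be a finitely supported subset of an invariant set $U$. (8) $\wp_{fs}(X)$ is FSM Dedekind infinite if and only if $X$ is FSM ascending infinite. (9) If $X$ is FSM Dedekind infinite, then $X$ is FSM ascending infinite; the converse fails, since $\wp_{fin}(A)$ is FSM ascending infinite but not FSM Dedekind infinite.
   Context: Framework (FSM). Work in ZF with a fixed infinite set $A$ of atoms; $S_A$ is the group of bijections of $A$ fixing all but finitely many atoms; $Fix(S)$ is the set of $\pi\in S_A$ fixing each element of $S\subseteq A$; $S$ supports $x$ if $\pi\cdot x=x$ for all $\pi\in Fix(S)$. An invariant set is an $S_A$-set all of whose elements have finite supports; subsets carry $\pi\star Z=\{\pi\cdot z:z\in Z\}$; $\wp_{fs}(X)$ is the set of subsets of $U$ contained in $X$ that are finitely supported under $\star$, and $\wp_{fin}(A)$ is the set of finite subsets of $A$. $\mathbb N$ carries the trivial action. A function is finitely supported if there is a finite $S$ such that for all $\pi\in Fix(S)$, $f(\pi\cdot x)=\pi\cdot f(x)$ and $\pi$ preserves domain and codomain. $X$ is FSM Dedekind infinite if there is a finitely supported injection from $X$ onto a finitely supported proper subset of $X$. $X$ is FSM ascending infinite if there is a sequence $(X_n)_{n\in\mathbb N}$ of finitely supported subsets of $U$ with $X_0\subseteq X_1\subseteq\cdots$, such that the map $n\mapsto X_n$ is finitely supported, $X\subseteq\bigcup_nX_n$, and there is no $n$ with $X\subseteq X_n$. *)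

theory Defs
  imports Main
begin

definition fsperm :: "('a \<Rightarrow> 'a) \<Rightarrow> bool" where
  "fsperm \<pi> \<longleftrightarrow> bij \<pi> \<and> finite {a. \<pi> a \<noteq> a}"

definition Fix :: "'a set \<Rightarrow> ('a \<Rightarrow> 'a) set" where
  "Fix S = {\<pi>. fsperm \<pi> \<and> (\<forall>a\<in>S. \<pi> a = a)}"

definition supports :: "(('a \<Rightarrow> 'a) \<Rightarrow> 'u \<Rightarrow> 'u) \<Rightarrow> 'a set \<Rightarrow> 'u \<Rightarrow> bool" where
  "supports act S x \<longleftrightarrow> (\<forall>\<pi>\<in>Fix S. act \<pi> x = x)"

definition fin_supp :: "(('a \<Rightarrow> 'a) \<Rightarrow> 'u \<Rightarrow> 'u) \<Rightarrow> 'u \<Rightarrow> bool" where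
  "fin_supp act x \<longleftrightarrow> (\<exists>S. finite S \<and> supports act S x)"

definition set_act :: "(('a \<Rightarrow> 'a) \<Rightarrow> 'u \<Rightarrow> 'u) \<Rightarrow> ('a \<Rightarrow> 'a) \<Rightarrow> 'u set \<Rightarrow> 'u set" where
  "set_act act \<pi> Z = act \<pi> ` Z"

definition atom_act :: "('a \<Rightarrow> 'a) \<Rightarrow> 'a \<Rightarrow> 'a" where
  "atom_act \<pi> a = \<pi> a"

definition invariant_set :: "(('a \<Rightarrow> 'a) \<Rightarrow> 'u \<Rightarrow> 'u) \<Rightarrow> 'u set \<Rightarrow> bool" where
  "invariant_set act U \<longleftrightarrow>
     (\<forall>\<pi> x. fsperm \<pi> \<and> x \<in> U \<longrightarrow> act \<pi> x \<in> U) \<and>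
     (\<forall>x\<in>U. act id x = x) \<and>
     (\<forall>\<pi> \<sigma> x. fsperm \<pi> \<and> fsperm \<sigma> \<and> x \<in> U \<longrightarrow> act (\<pi> \<circ> \<sigma>) x = act \<pi> (act \<sigma> x)) \<and>
     (\<forall>x\<in>U. fin_supp act x)"

definition fs_subset :: "(('a \<Rightarrow> 'a) \<Rightarrow> 'u \<Rightarrow> 'u) \<Rightarrow> 'u set \<Rightarrow> 'u set \<Rightarrow> bool" where
  "fs_subset act U X \<longleftrightarrow> X \<subseteq> U \<and> fin_supp (set_act act) X"

definition fs_pow :: "(('a \<Rightarrow> 'a) \<Rightarrow> 'u \<Rightarrow> 'u) \<Rightarrow> 'u set \<Rightarrow> 'u set set" where
  "fs_pow act X = {Y. Y \<subseteq> X \<and> fin_supp (set_act act) Y}"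

definition fs_fun :: "(('a \<Rightarrow> 'a) \<Rightarrow> 'u \<Rightarrow> 'u) \<Rightarrow> ('u \<Rightarrow> 'u) \<Rightarrow> 'u set \<Rightarrow> 'u set \<Rightarrow> bool" where
  "fs_fun act f X Y \<longleftrightarrow> f ` X \<subseteq> Y \<and>
     (\<exists>S. finite S \<and> (\<forall>\<pi>\<in>Fix S. set_act act \<pi> X = X \<and> set_act act \<pi> Y = Y \<and>
                          (\<forall>x\<in>X. f (act \<pi> x) = act \<pi> (f x))))"

definition fsm_dedekind_inf :: "(('a \<Rightarrow> 'a) \<Rightarrow> 'u \<Rightarrow> 'u) \<Rightarrow> 'u set \<Rightarrow> bool" where
  "fsm_dedekind_inf act X \<longleftrightarrow>
     (\<exists>f Y. Y \<subset> X \<and> fin_supp (set_act act) Y \<and> bij_betw f X Y \<and> fs_fun act f X X)"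

text \<open>FSM ascending infinite (relative to the invariant set U).  The sequence n \<mapsto> X_n,
  with the trivial action on nat, is finitely supported.\<close>
definition fsm_asc_inf :: "(('a \<Rightarrow> 'a) \<Rightarrow> 'u \<Rightarrow> 'u) \<Rightarrow> 'u set \<Rightarrow> 'u set \<Rightarrow> bool" where
  "fsm_asc_inf act U X \<longleftrightarrow>
     (\<exists>Xs :: nat \<Rightarrow> 'u set.
        (\<forall>n. Xs n \<subseteq> U \<and> fin_supp (set_act act) (Xs n)) \<and>
        (\<forall>n. Xs n \<subseteq> Xs (Suc n)) \<and>
        (\<exists>S. finite S \<and> (\<forall>\<pi>\<in>Fix S. \<forall>n. set_act act \<pi> (Xs n) = Xs n)) \<and>
        X \<subseteq> (\<Union>n. Xs n) \<and>
        (\<forall>n. \<not> X \<subseteq> Xs n))"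

end

theory Submission
  imports Defs "HOL-Library.Infinite_Set"
begin


definition gact :: "(('a \<Rightarrow> 'a) \<Rightarrow> 'u \<Rightarrow> 'u) \<Rightarrow> 'u set \<Rightarrow> bool" where
  "gact act U \<longleftrightarrow>
     (\<forall>\<pi> x. fsperm \<pi> \<and> x \<in> U \<longrightarrow> act \<pi> x \<in> U) \<and>
     (\<forall>x\<in>U. act id x = x) \<and>
     (\<forall>\<pi> \<sigma> x. fsperm \<pi> \<and> fsperm \<sigma> \<and> x \<in> U \<longrightarrow> act (\<pi> \<circ> \<sigma>) x = act \<pi> (act \<sigma> x))"

lemma inv_gact: "invariant_set act U \<Longrightarrow> gact act U"
  unfolding invariant_set_def gact_def by blast

lemma fsperm_id: "fsperm id" unfolding fsperm_def by simp

lemma fsperm_inv: assumes "fsperm \<pi>" shows "fsperm (inv \<pi>)"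
proof -
  have b: "bij \<pi>" using assms fsperm_def by blast
  have "{a. inv \<pi> a \<noteq> a} = {a. \<pi> a \<noteq> a}"
    using b by (metis bij_inv_eq_iff)
  then show ?thesis using assms b unfolding fsperm_def by (simp add: bij_imp_bij_inv)
qed

lemma fsperm_comp: assumes "fsperm \<pi>" "fsperm \<sigma>" shows "fsperm (\<pi> \<circ> \<sigma>)"
proof -
  have "{a. (\<pi> \<circ> \<sigma>) a \<noteq> a} \<subseteq> {a. \<pi> a \<noteq> a} \<union> {a. \<sigma> a \<noteq> a}" by auto
  then show ?thesis using assms unfolding fsperm_def
    by (meson bij_comp finite_UnI finite_subset)
qed

lemma Fix_inv: assumes "\<pi> \<in> Fix S" shows "inv \<pi> \<in> Fix S"
proof -
  have "fsperm \<pi>" "\<forall>a\<in>S. \<pi> a = a" using assms unfolding Fix_def by auto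
  moreover have "bij \<pi>" using \<open>fsperm \<pi>\<close> fsperm_def by blast
  ultimately show ?thesis unfolding Fix_def
    by (auto simp: fsperm_inv) (metis bij_is_inj inv_f_eq)
qed

lemma Fix_mono: "S \<subseteq> T \<Longrightarrow> Fix T \<subseteq> Fix S" unfolding Fix_def by auto

lemma supports_mono: "supports act S x \<Longrightarrow> S \<subseteq> T \<Longrightarrow> supports act T x"
  unfolding supports_def using Fix_mono by blast

lemma Fix_fsperm: "\<pi> \<in> Fix S \<Longrightarrow> fsperm \<pi>" unfolding Fix_def by auto

lemma gact_closed: "gact act U \<Longrightarrow> fsperm \<pi> \<Longrightarrow> x \<in> U \<Longrightarrow> act \<pi> x \<in> U"
  unfolding gact_def by blast

lemma gact_inv1: assumes "gact act U" "fsperm \<pi>" "x \<in> U"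
  shows "act (inv \<pi>) (act \<pi> x) = x"
proof -
  have "bij \<pi>" using assms fsperm_def by blast
  then have e: "inv \<pi> \<circ> \<pi> = id" by (simp add: bij_is_inj)
  have "act (inv \<pi> \<circ> \<pi>) x = act (inv \<pi>) (act \<pi> x)"
    using assms fsperm_inv[OF assms(2)] unfolding gact_def by blast
  moreover have "act id x = x" using assms unfolding gact_def by blast
  ultimately show ?thesis using e by (simp only: id_apply)
qed

lemma gact_inv2: assumes "gact act U" "fsperm \<pi>" "x \<in> U"
  shows "act \<pi> (act (inv \<pi>) x) = x"
proof -
  have "bij \<pi>" using assms fsperm_def by blast
  then have e: "\<pi> \<circ> inv \<pi> = id" using bij_is_surj surj_iff by blast
  have "act (\<pi> \<circ> inv \<pi>) x = act \<pi> (act (inv \<pi>) x)"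
    using assms fsperm_inv[OF assms(2)] unfolding gact_def by blast
  moreover have "act id x = x" using assms unfolding gact_def by blast
  ultimately show ?thesis using e by (simp only: id_apply)
qed

lemma gact_inj: assumes "gact act U" "fsperm \<pi>" shows "inj_on (act \<pi>) U"
  by (rule inj_on_inverseI[where g="act (inv \<pi>)"]) (rule gact_inv1[OF assms])

lemma gact_set: fixes act :: "('a \<Rightarrow> 'a) \<Rightarrow> 'u \<Rightarrow> 'u"
  assumes "gact act U" shows "gact (set_act act) (Pow U)"
proof -
  have c: "\<And>\<pi> x. fsperm \<pi> \<Longrightarrow> x \<in> U \<Longrightarrow> act \<pi> x \<in> U"
    and i: "\<And>x. x \<in> U \<Longrightarrow> act id x = x"
    and m: "\<And>\<pi> \<sigma> x. fsperm \<pi> \<Longrightarrow> fsperm \<sigma> \<Longrightarrow> x \<in> U \<Longrightarrow> act (\<pi> \<circ> \<sigma>) x = act \<pi> (act \<sigma> x)"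
    using assms unfolding gact_def by blast+
  have 1: "\<forall>\<pi> Z. fsperm \<pi> \<and> Z \<in> Pow U \<longrightarrow> set_act act \<pi> Z \<in> Pow U"
    unfolding set_act_def using c by blast
  have 2: "\<forall>Z\<in>Pow U. set_act act id Z = Z"
    unfolding set_act_def using i by (auto simp: image_def) (metis subsetD)
  have 3: "\<forall>\<pi> \<sigma> Z. fsperm \<pi> \<and> fsperm \<sigma> \<and> Z \<in> Pow U \<longrightarrow>
      set_act act (\<pi> \<circ> \<sigma>) Z = set_act act \<pi> (set_act act \<sigma> Z)"
  proof (intro allI impI)
    fix \<pi> \<sigma> :: "'a \<Rightarrow> 'a" and Z assume a: "fsperm \<pi> \<and> fsperm \<sigma> \<and> Z \<in> Pow U"
    have "act (\<pi> \<circ> \<sigma>) ` Z = (\<lambda>x. act \<pi> (act \<sigma> x)) ` Z"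
      using a m by (intro image_cong) auto
    then show "set_act act (\<pi> \<circ> \<sigma>) Z = set_act act \<pi> (set_act act \<sigma> Z)"
      unfolding set_act_def by (simp add: image_image)
  qed
  show ?thesis unfolding gact_def using 1 2 3 by blast
qed

lemma gact_fix_eq:
  assumes "gact act U" "Z \<subseteq> U" "\<And>\<pi>. \<pi> \<in> Fix S \<Longrightarrow> act \<pi> ` Z \<subseteq> Z" "\<pi> \<in> Fix S"
  shows "act \<pi> ` Z = Z"
proof
  show "act \<pi> ` Z \<subseteq> Z" using assms by blast
  show "Z \<subseteq> act \<pi> ` Z"
  proof
    fix z assume z: "z \<in> Z"
    have "act (inv \<pi>) z \<in> Z" using assms(3)[OF Fix_inv[OF assms(4)]] z by blast
    moreover have "act \<pi> (act (inv \<pi>) z) = z"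
      using gact_inv2[OF assms(1) Fix_fsperm[OF assms(4)]] z assms(2) by blast
    ultimately show "z \<in> act \<pi> ` Z" by (metis image_eqI)
  qed
qed

lemma gact_conj:
  assumes g: "gact act U" and x: "x \<in> U" and s: "supports act S x" and p: "fsperm \<pi>"
  shows "supports act (\<pi> ` S) (act \<pi> x)"
  unfolding supports_def
proof
  fix \<sigma> assume sg: "\<sigma> \<in> Fix (\<pi> ` S)"
  have fs: "fsperm \<sigma>" using sg Fix_fsperm by blast
  have b: "bij \<pi>" using p fsperm_def by blast
  define \<tau> where "\<tau> = inv \<pi> \<circ> \<sigma> \<circ> \<pi>"
  have ft: "fsperm \<tau>" unfolding \<tau>_def using fs p fsperm_inv fsperm_comp by blast
  have "\<forall>a\<in>S. \<tau> a = a"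
  proof
    fix a assume "a \<in> S"
    then have "\<sigma> (\<pi> a) = \<pi> a" using sg unfolding Fix_def by blast
    then show "\<tau> a = a" unfolding \<tau>_def using b by (simp add: bij_is_inj)
  qed
  then have tS: "\<tau> \<in> Fix S" using ft unfolding Fix_def by blast
  have "\<pi> \<circ> \<tau> = \<sigma> \<circ> \<pi>"
  proof
    fix a show "(\<pi> \<circ> \<tau>) a = (\<sigma> \<circ> \<pi>) a"
      unfolding \<tau>_def comp_def using surj_f_inv_f[OF bij_is_surj[OF b]] by blast
  qed
  moreover have "act (\<pi> \<circ> \<tau>) x = act \<pi> (act \<tau> x)" "act (\<sigma> \<circ> \<pi>) x = act \<sigma> (act \<pi> x)"
    using g x fs p ft unfolding gact_def by blast+
  ultimately have "act \<sigma> (act \<pi> x) = act \<pi> (act \<tau> x)" by simp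
  also have "act \<tau> x = x" using s tS unfolding supports_def by blast
  finally show "act \<sigma> (act \<pi> x) = act \<pi> x" .
qed

lemma gact_fin_supp:
  assumes "gact act U" "x \<in> U" "fin_supp act x" "fsperm \<pi>"
  shows "fin_supp act (act \<pi> x)"
proof -
  obtain S where "finite S" "supports act S x" using assms(3) unfolding fin_supp_def by blast
  then have "supports act (\<pi> ` S) (act \<pi> x)" "finite (\<pi> ` S)"
    using gact_conj[OF assms(1,2) _ assms(4)] by auto
  then show ?thesis unfolding fin_supp_def by blast
qed



lemma orbit_in: "f ` D \<subseteq> D \<Longrightarrow> x0 \<in> D \<Longrightarrow> (f ^^ k) x0 \<in> D"
  by (induction k) auto

lemma orbit_inj:
  assumes fD: "f ` D \<subseteq> D" and inj: "inj_on f D" and x0: "x0 \<in> D" and nx: "x0 \<notin> f ` D"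
  shows "(f ^^ i) x0 = (f ^^ j) x0 \<Longrightarrow> i = j"
proof (induction i arbitrary: j)
  case 0
  then show ?case
  proof (cases j)
    case (Suc j')
    then have "x0 = f ((f ^^ j') x0)" using 0 by simp
    moreover have "(f ^^ j') x0 \<in> D" using orbit_in[OF fD x0] .
    ultimately show ?thesis using nx by blast
  qed simp
next
  case (Suc i)
  show ?case
  proof (cases j)
    case 0
    then have "x0 = f ((f ^^ i) x0)" using Suc.prems by simp
    moreover have "(f ^^ i) x0 \<in> D" using orbit_in[OF fD x0] .
    ultimately show ?thesis using nx by blast
  next
    case (Suc j')
    then have "f ((f ^^ i) x0) = f ((f ^^ j') x0)" using Suc.prems by simp
    then have "(f ^^ i) x0 = (f ^^ j') x0"
      using inj orbit_in[OF fD x0] orbit_in[OF fD x0] unfolding inj_on_def by blast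
    then show ?thesis using Suc.IH Suc by simp
  qed
qed

lemma orbit_fix:
  assumes eq: "\<And>x. x \<in> D \<Longrightarrow> f (a x) = a (f x)" and fD: "f ` D \<subseteq> D" and x0: "x0 \<in> D"
    and ax: "a x0 = x0"
  shows "a ((f ^^ k) x0) = (f ^^ k) x0"
proof (induction k)
  case 0 then show ?case using ax by simp
next
  case (Suc k)
  have "a ((f ^^ Suc k) x0) = a (f ((f ^^ k) x0))" by simp
  also have "\<dots> = f (a ((f ^^ k) x0))" using eq[OF orbit_in[OF fD x0]] by simp
  also have "\<dots> = (f ^^ Suc k) x0" using Suc.IH by simp
  finally show ?case .
qed



lemma part2:
  fixes act :: "('a \<Rightarrow> 'a) \<Rightarrow> 'u \<Rightarrow> 'u"
  assumes g: "gact act U" and fsU: "\<forall>x\<in>U. fin_supp act x" and XU: "X \<subseteq> U"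
    and D: "fsm_dedekind_inf act X"
  shows "fsm_asc_inf act U X"
proof -
  obtain f Y where Y: "Y \<subset> X" and bj: "bij_betw f X Y" and ff: "fs_fun act f X X"
    using D unfolding fsm_dedekind_inf_def by blast
  have fX: "f ` X \<subseteq> X" using ff unfolding fs_fun_def by (rule conjunct1)
  have "\<exists>S. finite S \<and> (\<forall>\<pi>\<in>Fix S. set_act act \<pi> X = X \<and> set_act act \<pi> X = X \<and>
                          (\<forall>x\<in>X. f (act \<pi> x) = act \<pi> (f x)))"
    using ff unfolding fs_fun_def by (rule conjunct2)
  then obtain Sf where Sf: "finite Sf" and hf: "\<forall>\<pi>\<in>Fix Sf. set_act act \<pi> X = X \<and> set_act act \<pi> X = X \<and>
                          (\<forall>x\<in>X. f (act \<pi> x) = act \<pi> (f x))" by (elim exE conjE)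
  have imY: "f ` X = Y" using bj by (rule bij_betw_imp_surj_on)
  have inj: "inj_on f X" using bj by (rule bij_betw_imp_inj_on)
  obtain x0 where x0X: "x0 \<in> X" and x0Y: "x0 \<notin> Y" using Y by blast
  have nx: "x0 \<notin> f ` X" using x0Y imY by simp
  have "fin_supp act x0" using fsU x0X XU by blast
  then obtain S0 where S0: "finite S0" "supports act S0 x0" unfolding fin_supp_def by blast
  define S where "S = Sf \<union> S0"
  have fS: "finite S" unfolding S_def using Sf S0 by simp
  define orb where "orb = (\<lambda>k. (f ^^ k) x0)"
  have oX: "orb k \<in> X" for k unfolding orb_def by (rule orbit_in[OF fX x0X])
  have oinj: "orb i = orb j \<Longrightarrow> i = j" for i j unfolding orb_def by (rule orbit_inj[OF fX inj x0X nx])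
  have piX: "act \<pi> ` X = X" if "\<pi> \<in> Fix S" for \<pi>
  proof -
    have "\<pi> \<in> Fix Sf" using that Fix_mono[of Sf S] unfolding S_def by blast
    then show ?thesis using hf unfolding set_act_def by blast
  qed
  have pio: "act \<pi> (orb k) = orb k" if "\<pi> \<in> Fix S" for \<pi> k
  proof -
    have pf: "\<pi> \<in> Fix Sf" using that Fix_mono[of Sf S] unfolding S_def by blast
    have p0: "\<pi> \<in> Fix S0" using that Fix_mono[of S0 S] unfolding S_def by blast
    have eq: "\<And>x. x \<in> X \<Longrightarrow> f (act \<pi> x) = act \<pi> (f x)" using hf pf by blast
    have ax: "act \<pi> x0 = x0" using S0(2) p0 unfolding supports_def by blast
    show ?thesis unfolding orb_def by (rule orbit_fix[OF eq fX x0X ax])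
  qed
  define Xs where "Xs = (\<lambda>n. {x \<in> X. \<forall>k\<ge>n. x \<noteq> orb k})"
  have XsU: "Xs n \<subseteq> U" for n unfolding Xs_def using XU by blast
  have sub: "act \<pi> ` Xs n \<subseteq> Xs n" if p: "\<pi> \<in> Fix S" for \<pi> n
  proof (rule image_subsetI)
    fix x assume x: "x \<in> Xs n"
    then have xX: "x \<in> X" unfolding Xs_def by blast
    have "act \<pi> x \<in> X" using piX[OF p] xX by blast
    moreover have "act \<pi> x \<noteq> orb k" if "k \<ge> n" for k
    proof
      assume "act \<pi> x = orb k"
      then have "act \<pi> x = act \<pi> (orb k)" using pio[OF p] by simp
      moreover have "inj_on (act \<pi>) U" using gact_inj[OF g Fix_fsperm[OF p]] .
      ultimately have "x = orb k" using xX oX XU unfolding inj_on_def by blast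
      then show False using x that unfolding Xs_def by blast
    qed
    ultimately show "act \<pi> x \<in> Xs n" unfolding Xs_def by blast
  qed
  have inv: "set_act act \<pi> (Xs n) = Xs n" if p: "\<pi> \<in> Fix S" for \<pi> n
    unfolding set_act_def by (rule gact_fix_eq[OF g XsU sub p])
  have 1: "\<forall>n. Xs n \<subseteq> U \<and> fin_supp (set_act act) (Xs n)"
  proof
    fix n
    have "supports (set_act act) S (Xs n)" unfolding supports_def using inv by blast
    then have "fin_supp (set_act act) (Xs n)" unfolding fin_supp_def using fS by blast
    then show "Xs n \<subseteq> U \<and> fin_supp (set_act act) (Xs n)" using XsU by blast
  qed
  have 2: "\<forall>n. Xs n \<subseteq> Xs (Suc n)" unfolding Xs_def using Suc_leD by blast
  have 3: "\<exists>S. finite S \<and> (\<forall>\<pi>\<in>Fix S. \<forall>n. set_act act \<pi> (Xs n) = Xs n)"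
    using fS inv by blast
  have 4: "X \<subseteq> (\<Union>n. Xs n)"
  proof
    fix x assume xX: "x \<in> X"
    show "x \<in> (\<Union>n. Xs n)"
    proof (cases "\<exists>k. x = orb k")
      case True
      then obtain k where k: "x = orb k" by blast
      have "\<forall>k'\<ge>Suc k. x \<noteq> orb k'" using oinj k by fastforce
      then have "x \<in> Xs (Suc k)" using xX unfolding Xs_def by blast
      then show ?thesis by blast
    next
      case False
      then have "x \<in> Xs 0" using xX unfolding Xs_def by blast
      then show ?thesis by blast
    qed
  qed
  have 5: "\<forall>n. \<not> X \<subseteq> Xs n"
  proof
    fix n
    have "orb n \<notin> Xs n" unfolding Xs_def by blast
    then show "\<not> X \<subseteq> Xs n" using oX by blast
  qed
  show ?thesis unfolding fsm_asc_inf_def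
    by (rule exI[of _ Xs]) (intro conjI 1 2 3 4 5)
qed



lemma part1a:
  fixes act :: "('a \<Rightarrow> 'a) \<Rightarrow> 'u \<Rightarrow> 'u"
  assumes g: "gact act U" and XU: "X \<subseteq> U" and SX: "finite SX"
    and hX: "\<forall>\<pi>\<in>Fix SX. act \<pi> ` X = X"
    and A: "fsm_asc_inf act U X"
  shows "fsm_dedekind_inf (set_act act) (fs_pow act X)"
proof -
  obtain Xs :: "nat \<Rightarrow> 'u set" where
    h1: "\<forall>n. Xs n \<subseteq> U \<and> fin_supp (set_act act) (Xs n)" and
    h2: "\<forall>n. Xs n \<subseteq> Xs (Suc n)" and
    h3: "\<exists>S. finite S \<and> (\<forall>\<pi>\<in>Fix S. \<forall>n. set_act act \<pi> (Xs n) = Xs n)" and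
    h4: "X \<subseteq> (\<Union>n. Xs n)" and
    h5: "\<forall>n. \<not> X \<subseteq> Xs n"
    using A unfolding fsm_asc_inf_def by (elim exE conjE) blast
  obtain S1 where S1: "finite S1" and hS1: "\<forall>\<pi>\<in>Fix S1. \<forall>n. set_act act \<pi> (Xs n) = Xs n"
    using h3 by (elim exE conjE)
  define S where "S = S1 \<union> SX"
  have fS: "finite S" unfolding S_def using S1 SX by simp
  have FS1: "\<pi> \<in> Fix S1" if "\<pi> \<in> Fix S" for \<pi> using that Fix_mono[of S1 S] unfolding S_def by blast
  have FSX: "\<pi> \<in> Fix SX" if "\<pi> \<in> Fix S" for \<pi> using that Fix_mono[of SX S] unfolding S_def by blast
  have mono: "Xs m \<subseteq> Xs n" if "m \<le> n" for m n
    using lift_Suc_mono_le[of Xs, OF _ that] h2 by blast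
  define h where "h = (\<lambda>x. LEAST n. x \<in> Xs n)"
  have hin: "x \<in> Xs (h x)" if "x \<in> X" for x
  proof -
    have "\<exists>n. x \<in> Xs n" using h4 that by blast
    then show ?thesis unfolding h_def by (rule LeastI_ex)
  qed
  define R where "R = h ` X"
  have infR: "infinite R"
  proof
    assume "finite R"
    then obtain N where N: "\<forall>r\<in>R. r \<le> N" using finite_nat_set_iff_bounded_le by blast
    have "X \<subseteq> Xs N"
    proof
      fix x assume x: "x \<in> X"
      then have "h x \<le> N" using N unfolding R_def by blast
      then show "x \<in> Xs N" using hin[OF x] mono by blast
    qed
    then show False using h5 by blast
  qed
  obtain r :: "nat \<Rightarrow> nat" where smr: "strict_mono r" and rR: "\<forall>n. r n \<in> R"
    using infinite_enumerate[OF infR] by blast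
  define P where "P = (\<lambda>k. {x \<in> X. h x \<le> r k})"
  have Pstep: "P k < P (Suc k)" for k
  proof -
    have lt: "r k < r (Suc k)" using smr by (simp add: strict_mono_def)
    then have "P k \<subseteq> P (Suc k)" unfolding P_def by auto
    moreover obtain x where x: "x \<in> X" "h x = r (Suc k)" using rR unfolding R_def by (metis imageE)
    then have "x \<in> P (Suc k)" "x \<notin> P k" unfolding P_def using lt by auto
    ultimately show ?thesis by blast
  qed
  have injP: "inj P"
  proof (rule injI)
    fix i j assume e: "P i = P j"
    show "i = j"
    proof (rule ccontr)
      assume "i \<noteq> j"
      then consider "i < j" | "j < i" by linarith
      then show False
      proof cases
        case 1 then have "P i < P j" using lift_Suc_mono_less[of P, OF Pstep] by blast
        then show False using e by simp
      next
        case 2 then have "P j < P i" using lift_Suc_mono_less[of P, OF Pstep] by blast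
        then show False using e by simp
      qed
    qed
  qed
  have piX: "act \<pi> ` X = X" if "\<pi> \<in> Fix S" for \<pi> using hX FSX[OF that] by blast
  have hinv: "h (act \<pi> x) = h x" if p: "\<pi> \<in> Fix S" and x: "x \<in> X" for \<pi> x
  proof -
    have injp: "inj_on (act \<pi>) U" using gact_inj[OF g Fix_fsperm[OF p]] .
    have "act \<pi> x \<in> Xs n \<longleftrightarrow> x \<in> Xs n" for n
    proof
      have e: "act \<pi> ` Xs n = Xs n" using hS1 FS1[OF p] unfolding set_act_def by blast
      assume "act \<pi> x \<in> Xs n"
      then obtain y where y: "y \<in> Xs n" "act \<pi> x = act \<pi> y" using e by (metis imageE)
      have "y \<in> U" using y h1 by blast
      then have "x = y" using y(2) injp x XU unfolding inj_on_def by blast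
      then show "x \<in> Xs n" using y by simp
    next
      have e: "act \<pi> ` Xs n = Xs n" using hS1 FS1[OF p] unfolding set_act_def by blast
      assume "x \<in> Xs n"
      then show "act \<pi> x \<in> Xs n" using e by blast
    qed
    then show ?thesis unfolding h_def by simp
  qed
  have PU: "P k \<subseteq> U" for k unfolding P_def using XU by blast
  have Psub: "act \<pi> ` P k \<subseteq> P k" if p: "\<pi> \<in> Fix S" for \<pi> k
  proof (rule image_subsetI)
    fix x assume x: "x \<in> P k"
    then have xX: "x \<in> X" unfolding P_def by blast
    have "act \<pi> x \<in> X" using piX[OF p] xX by blast
    moreover have "h (act \<pi> x) = h x" using hinv[OF p xX] .
    ultimately show "act \<pi> x \<in> P k" using x unfolding P_def by simp
  qed
  have Pinv: "set_act act \<pi> (P k) = P k" if p: "\<pi> \<in> Fix S" for \<pi> k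
    unfolding set_act_def by (rule gact_fix_eq[OF g PU Psub p])
  define Fam where "Fam = fs_pow act X"
  have PFam: "P k \<in> Fam" for k
  proof -
    have "supports (set_act act) S (P k)" unfolding supports_def using Pinv by blast
    then have "fin_supp (set_act act) (P k)" unfolding fin_supp_def using fS by blast
    moreover have "P k \<subseteq> X" unfolding P_def by blast
    ultimately show ?thesis unfolding Fam_def fs_pow_def by blast
  qed
  have gs: "gact (set_act act) (Pow U)" by (rule gact_set[OF g])
  have FamU: "Fam \<subseteq> Pow U" unfolding Fam_def fs_pow_def using XU by blast
  have Famsub: "set_act act \<pi> ` Fam \<subseteq> Fam" if p: "\<pi> \<in> Fix S" for \<pi>
  proof (rule image_subsetI)
    fix Z assume Z: "Z \<in> Fam"
    then have ZX: "Z \<subseteq> X" and fZ: "fin_supp (set_act act) Z" unfolding Fam_def fs_pow_def by auto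
    have "set_act act \<pi> Z \<subseteq> X" using piX[OF p] ZX unfolding set_act_def by blast
    moreover have "fin_supp (set_act act) (set_act act \<pi> Z)"
      using gact_fin_supp[OF gs _ fZ Fix_fsperm[OF p]] ZX XU by blast
    ultimately show "set_act act \<pi> Z \<in> Fam" unfolding Fam_def fs_pow_def by blast
  qed
  have Faminv: "set_act act \<pi> ` Fam = Fam" if p: "\<pi> \<in> Fix S" for \<pi>
    by (rule gact_fix_eq[OF gs FamU Famsub p])
  define F where "F = (\<lambda>Z. if Z \<in> range P then P (Suc (inv P Z)) else Z)"
  have FP: "F (P k) = P (Suc k)" for k unfolding F_def using injP by simp
  have Fn: "Z \<notin> range P \<Longrightarrow> F Z = Z" for Z unfolding F_def by simp
  have injF: "inj F"
  proof (rule injI)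
    fix Z1 Z2 assume e: "F Z1 = F Z2"
    show "Z1 = Z2"
    proof (cases "Z1 \<in> range P"; cases "Z2 \<in> range P")
      assume a: "Z1 \<in> range P" "Z2 \<in> range P"
      then obtain i j where ij: "Z1 = P i" "Z2 = P j" by blast
      then have "P (Suc i) = P (Suc j)" using e FP by simp
      then have "Suc i = Suc j" by (rule injD[OF injP])
      then show ?thesis using ij by simp
    next
      assume a: "Z1 \<in> range P" "Z2 \<notin> range P"
      then obtain i where "Z1 = P i" by blast
      then have "Z2 = P (Suc i)" using e FP Fn[OF a(2)] by simp
      then show ?thesis using a by blast
    next
      assume a: "Z1 \<notin> range P" "Z2 \<in> range P"
      then obtain i where "Z2 = P i" by blast
      then have "Z1 = P (Suc i)" using e FP Fn[OF a(1)] by simp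
      then show ?thesis using a by blast
    next
      assume a: "Z1 \<notin> range P" "Z2 \<notin> range P"
      then show ?thesis using e Fn by simp
    qed
  qed
  have FFam: "F ` Fam \<subseteq> Fam"
  proof (rule image_subsetI)
    fix Z assume "Z \<in> Fam"
    then show "F Z \<in> Fam"
      by (cases "Z \<in> range P") (auto simp: FP Fn PFam)
  qed
  have Feq: "F (set_act act \<pi> Z) = set_act act \<pi> (F Z)" if p: "\<pi> \<in> Fix S" and Z: "Z \<in> Fam" for \<pi> Z
  proof (cases "Z \<in> range P")
    case True
    then obtain k where k: "Z = P k" by blast
    show ?thesis using k FP Pinv[OF p] by simp
  next
    case False
    have injs: "inj_on (set_act act \<pi>) (Pow U)" using gact_inj[OF gs Fix_fsperm[OF p]] .
    have "set_act act \<pi> Z \<notin> range P"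
    proof
      assume "set_act act \<pi> Z \<in> range P"
      then obtain k where "set_act act \<pi> Z = P k" by blast
      then have "set_act act \<pi> Z = set_act act \<pi> (P k)" using Pinv[OF p] by simp
      moreover have "Z \<in> Pow U" "P k \<in> Pow U" using Z FamU PU by auto
      ultimately have "Z = P k" using injs unfolding inj_on_def by blast
      then show False using False by blast
    qed
    then show ?thesis using Fn False by simp
  qed
  define Y where "Y = F ` Fam"
  have P0: "P 0 \<notin> Y"
  proof
    assume "P 0 \<in> Y"
    then obtain Z where Z: "Z \<in> Fam" "F Z = P 0" unfolding Y_def by blast
    show False
    proof (cases "Z \<in> range P")
      case True
      then obtain k where "Z = P k" by blast
      then have "P (Suc k) = P 0" using Z FP by simp
      then show False using injP unfolding inj_def by blast
    next
      case False
      then show False using Z Fn by auto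
    qed
  qed
  have YFam: "Y \<subset> Fam" using FFam P0 PFam unfolding Y_def by blast
  have YS: "set_act (set_act act) \<pi> Y = Y" if p: "\<pi> \<in> Fix S" for \<pi>
  proof -
    have "set_act (set_act act) \<pi> Y = (\<lambda>Z. set_act act \<pi> (F Z)) ` Fam"
      unfolding set_act_def[of "set_act act"] Y_def by (simp add: image_image)
    also have "\<dots> = (\<lambda>Z. F (set_act act \<pi> Z)) ` Fam"
      using Feq[OF p] by (intro image_cong) auto
    also have "\<dots> = F ` (set_act act \<pi> ` Fam)" by (simp add: image_image)
    also have "\<dots> = Y" using Faminv[OF p] unfolding Y_def by simp
    finally show ?thesis .
  qed
  have finY: "fin_supp (set_act (set_act act)) Y"
  proof -
    have "supports (set_act (set_act act)) S Y" unfolding supports_def using YS by blast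
    then show ?thesis unfolding fin_supp_def using fS by blast
  qed
  have bjF: "bij_betw F Fam Y" unfolding Y_def
    by (rule bij_betw_imageI) (rule inj_on_subset[OF injF], simp_all)
  have ffF: "fs_fun (set_act act) F Fam Fam"
    unfolding fs_fun_def
  proof (intro conjI exI)
    show "F ` Fam \<subseteq> Fam" by (rule FFam)
    show "finite S" by (rule fS)
    show "\<forall>\<pi>\<in>Fix S. set_act (set_act act) \<pi> Fam = Fam \<and> set_act (set_act act) \<pi> Fam = Fam \<and>
              (\<forall>x\<in>Fam. F (set_act act \<pi> x) = set_act act \<pi> (F x))"
      using Faminv Feq unfolding set_act_def[of "set_act act"] by blast
  qed
  show ?thesis unfolding fsm_dedekind_inf_def Fam_def[symmetric]
    using YFam finY bjF ffF by blast
qed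



lemma part1b:
  fixes act :: "('a \<Rightarrow> 'a) \<Rightarrow> 'u \<Rightarrow> 'u"
  assumes g: "gact act U" and XU: "X \<subseteq> U" and SX: "finite SX"
    and hX: "\<forall>\<pi>\<in>Fix SX. act \<pi> ` X = X"
    and D: "fsm_dedekind_inf (set_act act) (fs_pow act X)"
  shows "fsm_asc_inf act U X"
proof -
  define Fam where "Fam = fs_pow act X"
  obtain f Y where Y: "Y \<subset> Fam" and bj: "bij_betw f Fam Y" and ff: "fs_fun (set_act act) f Fam Fam"
    using D unfolding fsm_dedekind_inf_def Fam_def[symmetric] by blast
  have fFam: "f ` Fam \<subseteq> Fam" using ff unfolding fs_fun_def by (rule conjunct1)
  have "\<exists>S. finite S \<and> (\<forall>\<pi>\<in>Fix S. set_act (set_act act) \<pi> Fam = Fam \<and> set_act (set_act act) \<pi> Fam = Fam \<and>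
                          (\<forall>x\<in>Fam. f (set_act act \<pi> x) = set_act act \<pi> (f x)))"
    using ff unfolding fs_fun_def by (rule conjunct2)
  then obtain Sf where Sf: "finite Sf" and hf: "\<forall>\<pi>\<in>Fix Sf. set_act (set_act act) \<pi> Fam = Fam \<and> set_act (set_act act) \<pi> Fam = Fam \<and>
                          (\<forall>x\<in>Fam. f (set_act act \<pi> x) = set_act act \<pi> (f x))" by (elim exE conjE)
  have imY: "f ` Fam = Y" using bj by (rule bij_betw_imp_surj_on)
  have inj: "inj_on f Fam" using bj by (rule bij_betw_imp_inj_on)
  obtain B where BF: "B \<in> Fam" and BY: "B \<notin> Y" using Y by blast
  have nB: "B \<notin> f ` Fam" using BY imY by simp
  have "fin_supp (set_act act) B" using BF unfolding Fam_def fs_pow_def by blast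
  then obtain SB where SB: "finite SB" "supports (set_act act) SB B" unfolding fin_supp_def by blast
  define S where "S = Sf \<union> SB \<union> SX"
  have fS: "finite S" unfolding S_def using Sf SB SX by simp
  have FSf: "\<pi> \<in> Fix Sf" if "\<pi> \<in> Fix S" for \<pi> using that Fix_mono[of Sf S] unfolding S_def by blast
  have FSB: "\<pi> \<in> Fix SB" if "\<pi> \<in> Fix S" for \<pi> using that Fix_mono[of SB S] unfolding S_def by blast
  have FSX: "\<pi> \<in> Fix SX" if "\<pi> \<in> Fix S" for \<pi> using that Fix_mono[of SX S] unfolding S_def by blast
  define A where "A = (\<lambda>k. (f ^^ k) B)"
  have AF: "A k \<in> Fam" for k unfolding A_def by (rule orbit_in[OF fFam BF])
  have AX: "A k \<subseteq> X" for k using AF[of k] unfolding Fam_def fs_pow_def by blast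
  have injA: "inj A" by (rule injI) (unfold A_def, rule orbit_inj[OF fFam inj BF nB])
  have Ainv: "act \<pi> ` A k = A k" if p: "\<pi> \<in> Fix S" for \<pi> k
  proof -
    have eq: "\<And>x. x \<in> Fam \<Longrightarrow> f (set_act act \<pi> x) = set_act act \<pi> (f x)" using hf FSf[OF p] by blast
    have ax: "set_act act \<pi> B = B" using SB(2) FSB[OF p] unfolding supports_def by blast
    have "set_act act \<pi> (A k) = A k" unfolding A_def by (rule orbit_fix[OF eq fFam BF ax])
    then show ?thesis unfolding set_act_def .
  qed
  have piX: "act \<pi> ` X = X" if "\<pi> \<in> Fix S" for \<pi> using hX FSX[OF that] by blast
  define Inf where "Inf = (\<lambda>Z. infinite (range (\<lambda>i. A i \<inter> Z)))"
  have InfX: "Inf X"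
  proof -
    have "range (\<lambda>i. A i \<inter> X) = range A" using AX by (simp add: Int_absorb2)
    then show ?thesis unfolding Inf_def using range_inj_infinite[OF injA] by simp
  qed
  have split: "Inf (Z \<inter> A k) \<or> Inf (Z - A k)" if iz: "Inf Z" for Z k
  proof (rule ccontr)
    assume "\<not> (Inf (Z \<inter> A k) \<or> Inf (Z - A k))"
    then have f1: "finite (range (\<lambda>i. A i \<inter> (Z \<inter> A k)))" and f2: "finite (range (\<lambda>i. A i \<inter> (Z - A k)))"
      unfolding Inf_def by auto
    have "range (\<lambda>i. A i \<inter> Z) \<subseteq> (\<lambda>(p, q). p \<union> q) ` (range (\<lambda>i. A i \<inter> (Z \<inter> A k)) \<times> range (\<lambda>i. A i \<inter> (Z - A k)))"
    proof (rule image_subsetI)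
      fix i
      have "A i \<inter> Z = (\<lambda>(p, q). p \<union> q) (A i \<inter> (Z \<inter> A k), A i \<inter> (Z - A k))" by auto
      then show "A i \<inter> Z \<in> (\<lambda>(p, q). p \<union> q) ` (range (\<lambda>i. A i \<inter> (Z \<inter> A k)) \<times> range (\<lambda>i. A i \<inter> (Z - A k)))"
        by (rule image_eqI) (blast intro: rangeI)
    qed
    moreover have "finite ((\<lambda>(p, q). p \<union> q) ` (range (\<lambda>i. A i \<inter> (Z \<inter> A k)) \<times> range (\<lambda>i. A i \<inter> (Z - A k))))"
      using f1 f2 by simp
    ultimately have "finite (range (\<lambda>i. A i \<inter> Z))" by (rule finite_subset)
    then show False using iz unfolding Inf_def by simp
  qed
  define E where "E = rec_nat X (\<lambda>k Ek. if Inf (Ek \<inter> A k) then Ek \<inter> A k else Ek - A k)"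
  have E0: "E 0 = X" unfolding E_def by simp
  have ES: "E (Suc k) = (if Inf (E k \<inter> A k) then E k \<inter> A k else E k - A k)" for k
    unfolding E_def by simp
  have EInf: "Inf (E k)" for k
  proof (induction k)
    case 0 then show ?case using InfX E0 by simp
  next
    case (Suc k)
    show ?case using split[OF Suc.IH, of k] ES[of k] by auto
  qed
  have Estep: "E (Suc k) \<subseteq> E k" for k using ES[of k] by auto
  have Eanti: "E m \<subseteq> E n" if "n \<le> m" for m n
    using lift_Suc_antimono_le[of E, OF _ that] Estep by blast
  have EX: "E k \<subseteq> X" for k using Eanti[of 0 k] E0 by simp
  have EU: "E k \<subseteq> U" for k using EX XU by blast
  define I where "I = (\<Inter>k. E k)"
  define Xs where "Xs = (\<lambda>n. (X - E n) \<union> I)"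
  have Einv: "act \<pi> ` E k = E k" if p: "\<pi> \<in> Fix S" for \<pi> k
  proof (induction k)
    case 0 then show ?case using E0 piX[OF p] by simp
  next
    case (Suc k)
    have injp: "inj_on (act \<pi>) U" using gact_inj[OF g Fix_fsperm[OF p]] .
    have AU: "A k \<subseteq> U" using AX XU by blast
    have "act \<pi> ` (E k \<inter> A k) = E k \<inter> A k"
      using inj_on_image_Int[OF injp EU AU] Suc.IH Ainv[OF p] by simp
    moreover have "act \<pi> ` (E k - A k) = E k - A k"
    proof -
      have "E k - A k \<subseteq> U" using EU[of k] by blast
      then show ?thesis using inj_on_image_set_diff[OF injp _ AU, of "E k"] Suc.IH Ainv[OF p] by simp
    qed
    ultimately show ?case using ES[of k] by simp
  qed
  have Xsinv: "set_act act \<pi> (Xs n) = Xs n" if p: "\<pi> \<in> Fix S" for \<pi> n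
  proof -
    have injp: "inj_on (act \<pi>) U" using gact_inj[OF g Fix_fsperm[OF p]] .
    have "act \<pi> ` I = (\<Inter>k. act \<pi> ` E k)" unfolding I_def
      using image_INT[OF injp, of UNIV E 0] EU by blast
    also have "\<dots> = I" unfolding I_def using Einv[OF p] by simp
    finally have iI: "act \<pi> ` I = I" .
    have "X - E n \<subseteq> U" using XU by blast
    then have "act \<pi> ` (X - E n) = X - E n"
      using inj_on_image_set_diff[OF injp _ EU[of n], of X] piX[OF p] Einv[OF p] by simp
    then show ?thesis unfolding set_act_def Xs_def using iI by (simp add: image_Un)
  qed
  have XsU: "Xs n \<subseteq> U" for n unfolding Xs_def I_def using XU EU by blast
  have 1: "\<forall>n. Xs n \<subseteq> U \<and> fin_supp (set_act act) (Xs n)"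
  proof
    fix n
    have "supports (set_act act) S (Xs n)" unfolding supports_def using Xsinv by blast
    then have "fin_supp (set_act act) (Xs n)" unfolding fin_supp_def using fS by blast
    then show "Xs n \<subseteq> U \<and> fin_supp (set_act act) (Xs n)" using XsU by blast
  qed
  have 2: "\<forall>n. Xs n \<subseteq> Xs (Suc n)" unfolding Xs_def using Estep by blast
  have 3: "\<exists>S. finite S \<and> (\<forall>\<pi>\<in>Fix S. \<forall>n. set_act act \<pi> (Xs n) = Xs n)"
    using fS Xsinv by blast
  have 4: "X \<subseteq> (\<Union>n. Xs n)"
  proof
    fix x assume xX: "x \<in> X"
    show "x \<in> (\<Union>n. Xs n)"
    proof (cases "x \<in> I")
      case True
      then have "x \<in> Xs 0" unfolding Xs_def by blast
      then show ?thesis by blast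
    next
      case False
      then obtain k where "x \<notin> E k" unfolding I_def by blast
      then have "x \<in> Xs k" using xX unfolding Xs_def by blast
      then show ?thesis by blast
    qed
  qed
  have 5: "\<forall>n. \<not> X \<subseteq> Xs n"
  proof
    fix n
    show "\<not> X \<subseteq> Xs n"
    proof
      assume "X \<subseteq> Xs n"
      then have EnI: "E n \<subseteq> I" using EX[of n] unfolding Xs_def by blast
      have Ek: "E k = E n" if "n \<le> k" for k
        using Eanti[OF that] EnI unfolding I_def by blast
      have cases: "A k \<inter> E n \<in> {E n, {}}" if "n \<le> k" for k
      proof -
        have e1: "E (Suc k) = E k" using Ek[OF that] Ek[of "Suc k"] that by simp
        show ?thesis
        proof (cases "Inf (E k \<inter> A k)")
          case True
          then have "E k \<inter> A k = E k" using e1 ES[of k] by simp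
          then show ?thesis using Ek[OF that] by auto
        next
          case False
          then have "E k - A k = E k" using e1 ES[of k] by simp
          then show ?thesis using Ek[OF that] by auto
        qed
      qed
      have "range (\<lambda>i. A i \<inter> E n) \<subseteq> (\<lambda>i. A i \<inter> E n) ` {..<n} \<union> {E n, {}}"
      proof (rule image_subsetI)
        fix i
        show "A i \<inter> E n \<in> (\<lambda>i. A i \<inter> E n) ` {..<n} \<union> {E n, {}}"
        proof (cases "i < n")
          case True then show ?thesis by blast
        next
          case False
          then have "A i \<inter> E n \<in> {E n, {}}" using cases[of i] by simp
          then show ?thesis by (rule UnI2)
        qed
      qed
      moreover have "finite ((\<lambda>i. A i \<inter> E n) ` {..<n} \<union> {E n, {}})" by simp
      ultimately have "finite (range (\<lambda>i. A i \<inter> E n))" by (rule finite_subset)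
      then show False using EInf[of n] unfolding Inf_def by simp
    qed
  qed
  show ?thesis unfolding fsm_asc_inf_def
    by (rule exI[of _ Xs]) (intro conjI 1 2 3 4 5)
qed



lemma set_act_atom: "set_act atom_act \<pi> Y = \<pi> ` Y"
  unfolding set_act_def atom_act_def by simp

lemma card_level_inv:
  assumes p: "fsperm \<pi>"
  shows "(\<lambda>Y. \<pi> ` Y) ` {Y :: 'a set. finite Y \<and> card Y \<le> n} = {Y. finite Y \<and> card Y \<le> n}"
proof -
  have b: "bij \<pi>" using p unfolding fsperm_def by blast
  then have inj: "inj \<pi>" by (rule bij_is_inj)
  have sj: "surj \<pi>" using b by (rule bij_is_surj)
  show ?thesis
  proof
    show "(\<lambda>Y. \<pi> ` Y) ` {Y. finite Y \<and> card Y \<le> n} \<subseteq> {Y. finite Y \<and> card Y \<le> n}"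
    proof (rule image_subsetI)
      fix Y assume "Y \<in> {Y :: 'a set. finite Y \<and> card Y \<le> n}"
      then have "finite Y" "card Y \<le> n" by auto
      moreover have "card (\<pi> ` Y) = card Y" using inj by (simp add: card_image inj_on_subset)
      ultimately show "\<pi> ` Y \<in> {Y. finite Y \<and> card Y \<le> n}" by simp
    qed
    show "{Y. finite Y \<and> card Y \<le> n} \<subseteq> (\<lambda>Y. \<pi> ` Y) ` {Y. finite Y \<and> card Y \<le> n}"
    proof
      fix Y assume "Y \<in> {Y :: 'a set. finite Y \<and> card Y \<le> n}"
      then have Y: "finite Y" "card Y \<le> n" by auto
      let ?V = "inv \<pi> ` Y"
      have "finite ?V" using Y by simp
      moreover have "card ?V \<le> n" using Y card_image_le[of Y "inv \<pi>"] by linarith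
      moreover have "\<pi> ` ?V = Y" using sj by (simp add: image_image surj_f_inv_f)
      ultimately show "Y \<in> (\<lambda>Y. \<pi> ` Y) ` {Y. finite Y \<and> card Y \<le> n}"
        by (intro image_eqI[where x="?V"]) auto
    qed
  qed
qed

lemma part3:
  assumes inf: "infinite (UNIV :: 'a set)"
  shows "fsm_asc_inf (set_act atom_act) (fs_pow atom_act (UNIV :: 'a set)) {Y :: 'a set. finite Y}"
proof -
  define Xs where "Xs = (\<lambda>n. {Y :: 'a set. finite Y \<and> card Y \<le> n})"
  have fin_in: "Y \<in> fs_pow atom_act UNIV" if "finite Y" for Y :: "'a set"
  proof -
    have "supports (set_act atom_act) Y Y"
      unfolding supports_def set_act_atom
    proof
      fix \<pi> assume "\<pi> \<in> Fix Y"
      then have "\<forall>y\<in>Y. \<pi> y = y" unfolding Fix_def by blast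
      then have "\<pi> ` Y = id ` Y" by (intro image_cong) auto
      then show "\<pi> ` Y = Y" by simp
    qed
    then have "fin_supp (set_act atom_act) Y" using that unfolding fin_supp_def by blast
    then show ?thesis unfolding fs_pow_def by blast
  qed
  have inv: "set_act (set_act atom_act) \<pi> (Xs n) = Xs n" if "\<pi> \<in> Fix {}" for \<pi> n
  proof -
    have "fsperm \<pi>" using that unfolding Fix_def by blast
    moreover have "set_act atom_act \<pi> = (\<lambda>Y. \<pi> ` Y)" by (rule ext) (rule set_act_atom)
    ultimately show ?thesis unfolding Xs_def set_act_def[of "set_act atom_act"]
      by (simp only: card_level_inv)
  qed
  have 1: "\<forall>n. Xs n \<subseteq> fs_pow atom_act UNIV \<and> fin_supp (set_act (set_act atom_act)) (Xs n)"
  proof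
    fix n
    have "Xs n \<subseteq> fs_pow atom_act UNIV" using fin_in unfolding Xs_def by blast
    moreover have "supports (set_act (set_act atom_act)) {} (Xs n)"
      unfolding supports_def using inv by blast
    then have "fin_supp (set_act (set_act atom_act)) (Xs n)" unfolding fin_supp_def
      by (intro exI[of _ "{}"]) simp
    ultimately show "Xs n \<subseteq> fs_pow atom_act UNIV \<and> fin_supp (set_act (set_act atom_act)) (Xs n)" by blast
  qed
  have 2: "\<forall>n. Xs n \<subseteq> Xs (Suc n)" unfolding Xs_def by auto
  have 3: "\<exists>S. finite S \<and> (\<forall>\<pi>\<in>Fix S. \<forall>n. set_act (set_act atom_act) \<pi> (Xs n) = Xs n)"
  proof (intro exI conjI)
    show "finite ({} :: 'a set)" by simp
    show "\<forall>\<pi>\<in>Fix {}. \<forall>n. set_act (set_act atom_act) \<pi> (Xs n) = Xs n" using inv by blast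
  qed
  have 4: "{Y :: 'a set. finite Y} \<subseteq> (\<Union>n. Xs n)"
  proof
    fix Y :: "'a set" assume "Y \<in> {Y. finite Y}"
    then have "Y \<in> Xs (card Y)" unfolding Xs_def by simp
    then show "Y \<in> (\<Union>n. Xs n)" by blast
  qed
  have 5: "\<forall>n. \<not> {Y :: 'a set. finite Y} \<subseteq> Xs n"
  proof
    fix n
    obtain Y :: "'a set" where "finite Y" "card Y = Suc n" "Y \<subseteq> UNIV"
      using infinite_arbitrarily_large[OF inf] by blast
    then have "Y \<in> {Y :: 'a set. finite Y}" "Y \<notin> Xs n" unfolding Xs_def by auto
    then show "\<not> {Y :: 'a set. finite Y} \<subseteq> Xs n" by blast
  qed
  show ?thesis unfolding fsm_asc_inf_def
    by (rule exI[of _ Xs]) (intro conjI 1 2 3 4 5)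
qed




definition swp :: "'a \<Rightarrow> 'a \<Rightarrow> 'a \<Rightarrow> 'a" where
  "swp a b = (\<lambda>x. if x = a then b else if x = b then a else x)"

lemma swp_fsperm: "fsperm (swp a b)"
proof -
  have "swp a b \<circ> swp a b = id" unfolding swp_def by (auto simp: fun_eq_iff)
  then have "bij (swp a b)" using o_bij by blast
  moreover have "{x. swp a b x \<noteq> x} \<subseteq> {a, b}" unfolding swp_def by auto
  moreover have "finite {a, b}" by simp
  ultimately show ?thesis unfolding fsperm_def using finite_subset by blast
qed

lemma part4:
  assumes inf: "infinite (UNIV :: 'a set)"
  shows "\<not> fsm_dedekind_inf (set_act atom_act) {Y :: 'a set. finite Y}"
proof
  let ?X = "{Y :: 'a set. finite Y}"
  assume "fsm_dedekind_inf (set_act atom_act) ?X"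
  then obtain f Y where Y: "Y \<subset> ?X" and bj: "bij_betw f ?X Y" and ff: "fs_fun (set_act atom_act) f ?X ?X"
    unfolding fsm_dedekind_inf_def by blast
  have ex: "\<exists>S. finite S \<and> (\<forall>\<pi>\<in>Fix S. set_act (set_act atom_act) \<pi> ?X = ?X \<and> set_act (set_act atom_act) \<pi> ?X = ?X \<and>
                          (\<forall>x\<in>?X. f (set_act atom_act \<pi> x) = set_act atom_act \<pi> (f x)))"
    using ff unfolding fs_fun_def by (rule conjunct2)
  then obtain S where S: "finite S" and h0: "\<forall>\<pi>\<in>Fix S. set_act (set_act atom_act) \<pi> ?X = ?X \<and> set_act (set_act atom_act) \<pi> ?X = ?X \<and>
                          (\<forall>x\<in>?X. f (set_act atom_act \<pi> x) = set_act atom_act \<pi> (f x))"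
    by (elim exE conjE)
  have eq: "f (\<pi> ` Z) = \<pi> ` f Z" if "\<pi> \<in> Fix S" "finite Z" for \<pi> Z
  proof -
    have "\<forall>x\<in>?X. f (set_act atom_act \<pi> x) = set_act atom_act \<pi> (f x)" using h0 that(1) by blast
    then show ?thesis using that(2) unfolding set_act_atom by simp
  qed
  have fXs: "f ` ?X \<subseteq> ?X" using ff unfolding fs_fun_def by (rule conjunct1)
  have fX: "finite (f Z)" if "finite Z" for Z using fXs that by auto
  have key: "f Z \<subseteq> S \<union> Z" if Z: "finite Z" for Z
  proof
    fix a assume a: "a \<in> f Z"
    show "a \<in> S \<union> Z"
    proof (rule ccontr)
      assume na: "a \<notin> S \<union> Z"
      have "finite (S \<union> Z \<union> f Z)" using S Z fX by auto
      then obtain b where b: "b \<notin> S \<union> Z \<union> f Z" using ex_new_if_finite[OF inf] by metis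
      let ?p = "swp a b"
      have "\<forall>x\<in>S \<union> Z. ?p x = x" using na b unfolding swp_def by auto
      then have pF: "?p \<in> Fix (S \<union> Z)" unfolding Fix_def by (simp add: swp_fsperm)
      then have pS: "?p \<in> Fix S" unfolding Fix_def by blast
      have "?p ` Z = Z"
      proof -
        have "\<forall>x\<in>Z. ?p x = x" using pF unfolding Fix_def by blast
        then have "?p ` Z = id ` Z" by (intro image_cong) auto
        then show ?thesis by simp
      qed
      then have "f Z = ?p ` f Z" using eq[OF pS Z] by simp
      moreover have "b \<in> ?p ` f Z"
        by (rule image_eqI[where x=a]) (simp_all add: swp_def a)
      ultimately have "b \<in> f Z" by simp
      with b show False by simp
    qed
  qed
  have "?X \<subseteq> Y"
  proof
    fix W assume W: "W \<in> ?X"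
    let ?T = "S \<union> W"
    have fT: "finite (Pow ?T)" using S W by simp
    have sub: "Pow ?T \<subseteq> ?X" using S W by (auto intro: finite_subset)
    have "f ` Pow ?T \<subseteq> Pow ?T"
    proof (rule image_subsetI)
      fix V assume V: "V \<in> Pow ?T"
      then have "finite V" using sub by blast
      then have "f V \<subseteq> S \<union> V" by (rule key)
      then show "f V \<in> Pow ?T" using V by blast
    qed
    moreover have "inj_on f ?X" using bj by (simp add: bij_betw_def)
    then have "inj_on f (Pow ?T)" by (rule inj_on_subset[OF _ sub])
    ultimately have e: "f ` Pow ?T = Pow ?T" by (rule endo_inj_surj[OF fT])
    have "W \<in> Pow ?T" by blast
    then have "W \<in> f ` Pow ?T" using e by simp
    then have "W \<in> f ` ?X" using sub by blast
    then show "W \<in> Y" using bij_betw_imp_surj_on[OF bj] by simp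
  qed
  then show False using Y by blast
qed


theorem mainTheorem10:
  fixes act :: "('a \<Rightarrow> 'a) \<Rightarrow> 'u \<Rightarrow> 'u" and U X :: "'u set"
  assumes atoms_inf: "infinite (UNIV :: 'a set)"
    and U_inv: "invariant_set act U"
    and X_fs: "fs_subset act U X"
  shows "(fsm_dedekind_inf (set_act act) (fs_pow act X) \<longleftrightarrow> fsm_asc_inf act U X)
       \<and> (fsm_dedekind_inf act X \<longrightarrow> fsm_asc_inf act U X)
       \<and> fsm_asc_inf (set_act atom_act) (fs_pow atom_act (UNIV :: 'a set)) {Y :: 'a set. finite Y}
       \<and> \<not> fsm_dedekind_inf (set_act atom_act) {Y :: 'a set. finite Y}"
proof -
  have g: "gact act U" using U_inv by (rule inv_gact)
  have fsU: "\<forall>x\<in>U. fin_supp act x" using U_inv unfolding invariant_set_def by blast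
  have XU: "X \<subseteq> U" using X_fs unfolding fs_subset_def by blast
  have "fin_supp (set_act act) X" using X_fs unfolding fs_subset_def by blast
  then obtain SX where SX: "finite SX" and sX: "supports (set_act act) SX X"
    unfolding fin_supp_def by blast
  have hX: "\<forall>\<pi>\<in>Fix SX. act \<pi> ` X = X" using sX unfolding supports_def set_act_def by blast
  have c1: "fsm_dedekind_inf (set_act act) (fs_pow act X) \<longleftrightarrow> fsm_asc_inf act U X"
  proof
    assume "fsm_dedekind_inf (set_act act) (fs_pow act X)"
    then show "fsm_asc_inf act U X" by (rule part1b[OF g XU SX hX])
  next
    assume "fsm_asc_inf act U X"
    then show "fsm_dedekind_inf (set_act act) (fs_pow act X)" by (rule part1a[OF g XU SX hX])
  qed
  have c2: "fsm_dedekind_inf act X \<longrightarrow> fsm_asc_inf act U X"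
  proof
    assume "fsm_dedekind_inf act X"
    then show "fsm_asc_inf act U X" by (rule part2[OF g fsU XU])
  qed
  show ?thesis using c1 c2 part3[OF atoms_inf] part4[OF atoms_inf] by blast
qed

end
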